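(* Let $A\subseteq X$ be a clopen set with $A\neq\emptyset$, $A\neq X$. Then in $G=S(2^\infty)\ltimes \widetilde C(X;\mathbb{Z}_2)$ one has $\mathrm{fpc}(\widetilde f_A)=\{e,\widetilde f_A\}$.
   Context: For a group $G$ and $g\in G$, $C_G(g)$ is the centralizer of $g$ and $\mathrm{fpc}(g)=\{h\in G:\ \{t^{-1}ht: t\in C_G(g)\}\text{ is finite}\}$. For $n\ge1$ let $S(2^n)$ be the symmetric group of the finite set $\{0,1\}^n$, embedded in $S(2^{n+1})$ via $s\mapsto\tilde s$, $\tilde s(x,y)=(s(x),y)$ ($x\in\{0,1\}^n$, $y\in\{0,1\}$); $S(2^\infty)=\bigcup_n S(2^n)$. Let $X=\{0,1\}^{\mathbb N}$; $S(2^\infty)$ acts on $X$ by homeomorphisms via $s(x,y)=(s(x),y)$ for $s\in S(2^n)$, $x\in\{0,1\}^n$, $y\in\{0,1\}^{\mathbb N}$. $C(X;\mathbb Z_2)$ is the abelian group of continuous maps $X\to\mathbb Z_2$ under pointwise addition; its elements are $f_A=\mathbf 1_A$ for clopen $A\subseteq X$, with $f_Af_B=f_{A\triangle B}$. $S(2^\infty)$ acts by $g\cdot f_A=f_{g(A)}$. The constant functions $\{f_\emptyset,f_X\}$ form an invariant subgroup and $\widetilde C(X;\mathbb Z_2)$ is the quotient group; $\widetilde f_A$ denotes the class of $f_A$ (so $\widetilde f_A=\widetilde f_{X\setminus A}$). $G=S(2^\infty)\ltimes\widetilde C(X;\mathbb Z_2)$, with $g\widetilde f_Ag^{-1}=\widetilde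 f_{g(A)}$. *)

theory Defs
  imports "HOL-Analysis.Analysis" "HOL-Algebra.Group"
begin

text \<open>The Cantor space X = {0,1}^N is the type nat \<Rightarrow> bool with the product topology
  (bool carries the discrete = order topology).\<close>

type_synonym cantor = "nat \<Rightarrow> bool"

definition clopen_set :: "cantor set \<Rightarrow> bool" where
  "clopen_set A \<longleftrightarrow> open A \<and> closed A"

text \<open>S(2^\<infinity>): homeomorphisms of X of the form (x,y) \<mapsto> (s(x),y) with s a permutation
  of {0,1}^n for some n: bijections that leave every coordinate i \<ge> n unchanged and whose
  first n output coordinates depend only on the first n input coordinates.\<close>

definition S2inf :: "(cantor \<Rightarrow> cantor) set" where
  "S2inf = {g. bij g \<and> (\<exists>n. \<forall>x y. (\<forall>i\<ge>n. g x i = x i) \<and>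
                 ((\<forall>i<n. x i = y i) \<longrightarrow> (\<forall>i<n. g x i = g y i)))}"

text \<open>Elements of the quotient C~(X;Z_2) are represented by the class {A, X - A} of a
  clopen set A (this is exactly the coset f_A + {f_0, f_X}).\<close>

definition cls :: "cantor set \<Rightarrow> cantor set set" where
  "cls A = {A, - A}"

definition Ctilde :: "cantor set set set" where
  "Ctilde = {cls A | A. clopen_set A}"

text \<open>Sum of classes (f_A f_B = f_{A \<triangle> B}) and action g . f_A = f_{g(A)}.\<close>

definition cls_add :: "cantor set set \<Rightarrow> cantor set set \<Rightarrow> cantor set set" where
  "cls_add F K = {(B - C) \<union> (C - B) | B C. B \<in> F \<and> C \<in> K}"

definition cls_act :: "(cantor \<Rightarrow> cantor) \<Rightarrow> cantor set set \<Rightarrow> cantor set set" where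
  "cls_act g F = (\<lambda>B. g ` B) ` F"

text \<open>G = S(2^\<infinity>) \<ltimes> C~(X;Z_2): the pair (g, F) stands for the product g \<cdot> F, so that
  (g F)(h K) = (g h)(h^{-1}(F) K); equivalently g F g^{-1} = g(F).\<close>

definition Gsd :: "((cantor \<Rightarrow> cantor) \<times> cantor set set) monoid" where
  "Gsd = \<lparr> carrier = S2inf \<times> Ctilde,
          mult = (\<lambda>(g, F) (h, K). (g \<circ> h, cls_add (cls_act (inv_into UNIV h) F) K)),
          one = (id, cls {}) \<rparr>"

definition ftilde :: "cantor set \<Rightarrow> (cantor \<Rightarrow> cantor) \<times> cantor set set" where
  "ftilde A = (id, cls A)"

definition centralizer_of :: "('a, 'b) monoid_scheme \<Rightarrow> 'a \<Rightarrow> 'a set" where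
  "centralizer_of G g = {t \<in> carrier G. t \<otimes>\<^bsub>G\<^esub> g = g \<otimes>\<^bsub>G\<^esub> t}"

definition fpc :: "('a, 'b) monoid_scheme \<Rightarrow> 'a \<Rightarrow> 'a set" where
  "fpc G g = {h \<in> carrier G.
     finite {inv\<^bsub>G\<^esub> t \<otimes>\<^bsub>G\<^esub> h \<otimes>\<^bsub>G\<^esub> t | t. t \<in> centralizer_of G g}}"

end

theory Submission
  imports Defs
begin

definition detn :: "nat \<Rightarrow> cantor set \<Rightarrow> bool" where
  "detn N B \<longleftrightarrow> (\<forall>x y. (\<forall>i<N. x i = y i) \<longrightarrow> (x \<in> B \<longleftrightarrow> y \<in> B))"

lemma det_mono: "detn N B \<Longrightarrow> N \<le> M \<Longrightarrow> detn M B"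
  unfolding detn_def by auto

lemma compact_cantor: "compact (UNIV :: cantor set)"
proof -
  have "compact_space (euclidean :: bool topology)"
    by (simp add: compact_space_def compactin_euclidean_iff finite_imp_compact)
  then have "compact_space (product_topology (\<lambda>i::nat. (euclidean::bool topology)) UNIV)"
    by (simp add: compact_space_product_topology)
  then show ?thesis
    by (simp add: euclidean_product_topology compact_space_def compactin_euclidean_iff)
qed

lemma open_cyl: "open {y::cantor. \<forall>i<n. y i = x i}"
proof -
  have eq: "{y::cantor. \<forall>i<n. y i = x i} = (\<Inter>i\<in>{..<n}. (\<lambda>y. y i) -` {x i})" by auto
  have ob: "open {b::bool}" for b by (cases b) (auto simp: open_discrete)
  have c: "continuous_on UNIV (\<lambda>y::cantor. y i)" for i
    by (rule continuous_on_product_then_coordinatewise) (rule continuous_on_id)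
  show ?thesis unfolding eq
    by (intro open_INT finite_lessThan ballI open_vimage[OF ob c])
qed

lemma open_cyl_in: fixes x :: cantor assumes "open U" "x \<in> U" shows "\<exists>n. \<forall>y. (\<forall>i<n. y i = x i) \<longrightarrow> y \<in> U"
proof -
  have "openin (product_topology (\<lambda>i::nat. (euclidean::bool topology)) UNIV) U"
    using assms(1) by (simp add: open_fun_def)
  from product_topology_open_contains_basis[OF this assms(2)] obtain X where
    X: "x \<in> (\<Pi>\<^sub>E i\<in>UNIV. X i)" "finite {i. X i \<noteq> topspace (euclidean::bool topology)}"
       "(\<Pi>\<^sub>E i\<in>UNIV. X i) \<subseteq> U" by blast
  have fin: "finite {i. X i \<noteq> UNIV}" using X(2) by simp
  obtain n where n: "{i. X i \<noteq> UNIV} \<subseteq> {..<n}" using finite_nat_bounded[OF fin] by blast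
  show ?thesis
  proof (intro exI allI impI)
    fix y :: cantor assume y: "\<forall>i<n. y i = x i"
    have "y i \<in> X i" for i
    proof (cases "i < n")
      case True
      have "x i \<in> X i" using X(1) by (simp add: PiE_iff)
      then show ?thesis using y True by simp
    next
      case False
      then have "X i = UNIV" using n by blast
      then show ?thesis by simp
    qed
    then have "y \<in> (\<Pi>\<^sub>E i\<in>UNIV. X i)" by (simp add: PiE_iff)
    then show "y \<in> U" using X(3) by blast
  qed
qed

lemma clopen_det: assumes "clopen_set B" shows "\<exists>N. detn N B"
proof -
  have "\<forall>x. \<exists>n. \<forall>y. (\<forall>i<n. y i = x i) \<longrightarrow> (y \<in> B \<longleftrightarrow> x \<in> B)"
  proof
    fix x show "\<exists>n. \<forall>y. (\<forall>i<n. y i = x i) \<longrightarrow> (y \<in> B \<longleftrightarrow> x \<in> B)"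
    proof (cases "x \<in> B")
      case True
      have "open B" using assms by (simp add: clopen_set_def)
      from open_cyl_in[OF this True] obtain n where "\<forall>y. (\<forall>i<n. y i = x i) \<longrightarrow> y \<in> B" by blast
      then show ?thesis using True by blast
    next
      case False
      have "open (- B)" using assms by (simp add: clopen_set_def open_Compl)
      from open_cyl_in[OF this] False obtain n where "\<forall>y. (\<forall>i<n. y i = x i) \<longrightarrow> y \<in> - B" by blast
      then show ?thesis using False by blast
    qed
  qed
  from choice[OF this] obtain nf where nf: "\<forall>x. \<forall>y. (\<forall>i<nf x. y i = x i) \<longrightarrow> (y \<in> B \<longleftrightarrow> x \<in> B)"
    by blast
  have opn: "\<And>c. c \<in> UNIV \<Longrightarrow> open {y::cantor. \<forall>i<nf c. y i = c i}" by (rule open_cyl)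
  have cov: "UNIV \<subseteq> (\<Union>c\<in>UNIV. {y::cantor. \<forall>i<nf c. y i = c i})" by blast
  obtain C' where C': "C' \<subseteq> UNIV" "finite C'" "UNIV \<subseteq> (\<Union>c\<in>C'. {y::cantor. \<forall>i<nf c. y i = c i})"
    using compactE_image[OF compact_cantor opn cov] .
  define N where "N = Max (nf ` C')"
  have le: "c \<in> C' \<Longrightarrow> nf c \<le> N" for c using C'(2) by (simp add: N_def)
  show ?thesis
  proof (rule exI[of _ N], unfold detn_def, intro allI impI)
    fix x y :: cantor assume xy: "\<forall>i<N. x i = y i"
    have "x \<in> (\<Union>c\<in>C'. {y::cantor. \<forall>i<nf c. y i = c i})" using C'(3) by blast
    then obtain c where c: "c \<in> C'" "\<forall>i<nf c. x i = c i" by blast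
    have "\<forall>i<nf c. y i = c i" using c xy le[OF c(1)] by auto
    then have "y \<in> B \<longleftrightarrow> c \<in> B" using nf by blast
    moreover have "x \<in> B \<longleftrightarrow> c \<in> B" using nf c(2) by blast
    ultimately show "x \<in> B \<longleftrightarrow> y \<in> B" by simp
  qed
qed

lemma det_open: assumes "detn N B" shows "open B"
proof -
  have "\<exists>T. open T \<and> x \<in> T \<and> T \<subseteq> B" if x: "x \<in> B" for x
  proof -
    have "y \<in> B" if y: "\<forall>i<N. y i = x i" for y
    proof -
      have "(\<forall>i<N. y i = x i) \<longrightarrow> (y \<in> B \<longleftrightarrow> x \<in> B)" using assms unfolding detn_def by blast
      then show ?thesis using x y by blast
    qed
    then have "{y. \<forall>i<N. y i = x i} \<subseteq> B" by blast
    moreover have "x \<in> {y. \<forall>i<N. y i = x i}" by simp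
    ultimately show ?thesis using open_cyl[of N x] by blast
  qed
  then show ?thesis using open_subopen[of B] by blast
qed

lemma det_clopen: assumes "detn N B" shows "clopen_set B"
proof -
  have "detn N (-B)" using assms by (simp add: detn_def)
  then have "open (-B)" by (rule det_open)
  then have "closed B" by (simp add: closed_open)
  then show ?thesis using det_open[OF assms] by (simp add: clopen_set_def)
qed

definition level :: "(cantor \<Rightarrow> cantor) \<Rightarrow> nat \<Rightarrow> bool" where
  "level k n \<longleftrightarrow> (\<forall>x. \<forall>i\<ge>n. k x i = x i) \<and> (\<forall>x y. (\<forall>i<n. x i = y i) \<longrightarrow> (\<forall>i<n. k x i = k y i))"

lemma all2_split: "(\<forall>x y. P x \<and> Q x y) \<longleftrightarrow> (\<forall>x. P x) \<and> (\<forall>x y. Q x y)"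
  by blast

lemma S2inf_iff: "g \<in> S2inf \<longleftrightarrow> bij g \<and> (\<exists>n. level g n)"
  unfolding S2inf_def level_def mem_Collect_eq all2_split[where P="\<lambda>x. \<forall>i\<ge>_. g x i = x i"] ..

lemma level_mono: assumes "level k n" "n \<le> M" shows "level k M"
  unfolding level_def
proof (intro conjI allI impI)
  fix x :: cantor and i :: nat assume "M \<le> i" then show "k x i = x i" using assms by (auto simp: level_def)
next
  fix x y :: cantor and i :: nat assume xy: "\<forall>i<M. x i = y i" and i: "i < M"
  show "k x i = k y i"
  proof (cases "i < n")
    case True then show ?thesis using assms xy unfolding level_def by auto
  next
    case False then show ?thesis using assms xy i unfolding level_def by auto
  qed
qed

lemma level_inj_prefix: fixes x y :: cantor assumes "bij k" "level k n" "\<forall>i<n. k x i = k y i" shows "\<forall>i<n. x i = y i"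
proof -
  define z where "z = (\<lambda>i. if i < n then y i else x i)"
  have "k z = k x"
  proof
    fix i show "k z i = k x i"
    proof (cases "i < n")
      case True
      have "\<forall>j<n. z j = y j" by (simp add: z_def)
      then have "k z i = k y i" using assms(2) True unfolding level_def by blast
      then show ?thesis using assms(3) True by simp
    next
      case False then show ?thesis using assms(2) unfolding level_def z_def by auto
    qed
  qed
  then have "z = x" using assms(1) by (simp add: bij_def inj_eq)
  moreover have "\<forall>i<n. z i = y i" by (simp add: z_def)
  ultimately show ?thesis by simp
qed

lemma level_inv: assumes "bij k" "level k n" shows "level (inv_into UNIV k) n"
  unfolding level_def
proof (intro conjI allI impI)
  fix y :: cantor and i :: nat assume i: "n \<le> i"
  have "k (inv_into UNIV k y) = y" using assms(1) by (simp add: bij_is_surj surj_f_inv_f)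
  then show "inv_into UNIV k y i = y i" using assms(2) i unfolding level_def by metis
next
  fix x y :: cantor and i :: nat assume xy: "\<forall>i<n. x i = y i" and i: "i < n"
  have "k (inv_into UNIV k x) = x" "k (inv_into UNIV k y) = y" using assms(1) by (simp_all add: bij_is_surj surj_f_inv_f)
  then have "\<forall>i<n. k (inv_into UNIV k x) i = k (inv_into UNIV k y) i" using xy by simp
  then show "inv_into UNIV k x i = inv_into UNIV k y i" using level_inj_prefix[OF assms] i by blast
qed

lemma level_comp: assumes "level g n" "level h n" shows "level (g \<circ> h) n"
  using assms unfolding level_def by auto

lemma S2inf_comp: "g \<in> S2inf \<Longrightarrow> h \<in> S2inf \<Longrightarrow> g \<circ> h \<in> S2inf"
proof -
  assume "g \<in> S2inf" "h \<in> S2inf"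
  then obtain n1 n2 where "bij g" "bij h" "level g n1" "level h n2" by (auto simp: S2inf_iff)
  then have "level g (max n1 n2)" "level h (max n1 n2)" by (auto intro: level_mono)
  then show ?thesis using \<open>bij g\<close> \<open>bij h\<close> by (auto simp: S2inf_iff intro: level_comp bij_comp)
qed

lemma S2inf_inv: "g \<in> S2inf \<Longrightarrow> inv_into UNIV g \<in> S2inf"
  by (auto simp: S2inf_iff intro: level_inv bij_imp_bij_inv)

lemma det_vimage: assumes "level k n" "detn N B" shows "detn (max n N) (k -` B)"
proof -
  have l: "level k (max n N)" using assms(1) by (rule level_mono) simp
  show ?thesis unfolding detn_def
  proof (intro allI impI)
    fix x y :: cantor assume "\<forall>i<max n N. x i = y i"
    moreover from this have "\<forall>i<max n N. k x i = k y i" using l unfolding level_def by blast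
    then have "\<forall>i<N. k x i = k y i" by simp
    then show "x \<in> k -` B \<longleftrightarrow> y \<in> k -` B" using assms(2) unfolding detn_def by simp
  qed
qed

definition sd :: "cantor set \<Rightarrow> cantor set \<Rightarrow> cantor set" where
  "sd X Y = (X - Y) \<union> (Y - X)"

lemma mem_sd[simp]: "x \<in> sd X Y \<longleftrightarrow> (x \<in> X) \<noteq> (x \<in> Y)"
  by (auto simp: sd_def)

lemma det_sd: assumes "detn N X" "detn N Y" shows "detn N (sd X Y)"
  unfolding detn_def
proof (intro allI impI)
  fix x y :: cantor assume xy: "\<forall>i<N. x i = y i"
  have "x \<in> X \<longleftrightarrow> y \<in> X" "x \<in> Y \<longleftrightarrow> y \<in> Y" using assms xy unfolding detn_def by blast+
  then show "x \<in> sd X Y \<longleftrightarrow> y \<in> sd X Y" by simp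
qed

lemma sd_eqs: "sd B (-C) = - sd B C" "sd (-B) C = - sd B C" "sd (-B) (-C) = sd B C"
  by (auto simp: sd_def)

lemma cls_add_cls: "cls_add (cls B) (cls C) = cls (sd B C)"
proof (rule Set.set_eqI)
  fix Z
  have "Z \<in> cls_add (cls B) (cls C) \<longleftrightarrow> (\<exists>X Y. Z = sd X Y \<and> X \<in> {B, -B} \<and> Y \<in> {C, -C})"
    by (simp add: cls_add_def sd_def cls_def)
  also have "\<dots> \<longleftrightarrow> Z = sd B C \<or> Z = sd B (-C) \<or> Z = sd (-B) C \<or> Z = sd (-B) (-C)"
    by (simp only: insert_iff empty_iff simp_thms ex_disj_distrib conj_disj_distribL conj_disj_distribR) blast
  also have "\<dots> \<longleftrightarrow> Z \<in> cls (sd B C)"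
    by (simp only: sd_eqs cls_def insert_iff empty_iff simp_thms) blast
  finally show "Z \<in> cls_add (cls B) (cls C) \<longleftrightarrow> Z \<in> cls (sd B C)" .
qed

lemma cls_act_cls: assumes "bij g" shows "cls_act (inv_into UNIV g) (cls B) = cls (g -` B)"
proof -
  have "inv_into UNIV g ` B = g -` B" "inv_into UNIV g ` (-B) = g -` (-B)"
    using bij_vimage_eq_inv_image[OF assms] by simp_all
  then show ?thesis by (simp add: cls_act_def cls_def vimage_Compl)
qed

lemma cls_eq: "cls X = cls Y \<longleftrightarrow> X = Y \<or> X = - Y"
  unfolding cls_def doubleton_eq_iff Compl_eq_Compl_iff by (metis Compl_eq double_compl)

lemma Ctilde_iff: "F \<in> Ctilde \<longleftrightarrow> (\<exists>B N. F = cls B \<and> detn N B)"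
proof
  assume "F \<in> Ctilde"
  then obtain B where "F = cls B" "clopen_set B" by (auto simp: Ctilde_def)
  then show "\<exists>B N. F = cls B \<and> detn N B" using clopen_det by blast
next
  assume "\<exists>B N. F = cls B \<and> detn N B"
  then obtain B N where "F = cls B" "detn N B" by blast
  then show "F \<in> Ctilde" using det_clopen unfolding Ctilde_def by blast
qed

lemma carrier_Gsd: "carrier Gsd = S2inf \<times> Ctilde"
  by (simp add: Gsd_def)

lemma one_Gsd: "\<one>\<^bsub>Gsd\<^esub> = (id, cls {})"
  by (simp add: Gsd_def)

lemma mult_Gsd: "bij h \<Longrightarrow> (g, cls B) \<otimes>\<^bsub>Gsd\<^esub> (h, cls C) = (g \<circ> h, cls (sd (h -` B) C))"
  by (simp add: Gsd_def cls_act_cls cls_add_cls)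

lemma carrierE:
  assumes "x \<in> carrier Gsd"
  obtains g n B N where "x = (g, cls B)" "bij g" "level g n" "detn N B"
  using assms by (auto simp: carrier_Gsd S2inf_iff Ctilde_iff)

lemma carrierI: "bij g \<Longrightarrow> level g n \<Longrightarrow> detn N B \<Longrightarrow> (g, cls B) \<in> carrier Gsd"
  by (auto simp: carrier_Gsd S2inf_iff Ctilde_iff)

lemma group_Gsd: "group Gsd"
proof (rule groupI)
  fix x y assume xc: "x \<in> carrier Gsd" and yc: "y \<in> carrier Gsd"
  from xc obtain g n B N where x: "x = (g, cls B)" "bij g" "level g n" "detn N B" by (rule carrierE)
  from yc obtain h n' C N' where y: "y = (h, cls C)" "bij h" "level h n'" "detn N' C" by (rule carrierE)
  have "level g (max n n')" "level h (max n n')" using x(3) y(3) by (auto intro: level_mono)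
  then have l: "level (g \<circ> h) (max n n')" by (rule level_comp)
  have d1: "detn (max (max n' N) N') (h -` B)" using det_vimage[OF y(3) x(4)] by (rule det_mono) simp
  have d2: "detn (max (max n' N) N') C" using y(4) by (rule det_mono) simp
  have "x \<otimes>\<^bsub>Gsd\<^esub> y = (g \<circ> h, cls (sd (h -` B) C))" using x(1) y(1) mult_Gsd[OF y(2)] by simp
  moreover have "(g \<circ> h, cls (sd (h -` B) C)) \<in> carrier Gsd"
    by (rule carrierI[OF bij_comp[OF y(2) x(2)] l det_sd[OF d1 d2]])
  ultimately show "x \<otimes>\<^bsub>Gsd\<^esub> y \<in> carrier Gsd" by simp
next
  show "\<one>\<^bsub>Gsd\<^esub> \<in> carrier Gsd" unfolding one_Gsd
    by (rule carrierI[of _ 0 0]) (auto simp: level_def detn_def)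
next
  fix x y z assume xc: "x \<in> carrier Gsd" and yc: "y \<in> carrier Gsd" and zc: "z \<in> carrier Gsd"
  from xc obtain g n B N where x: "x = (g, cls B)" "bij g" by (rule carrierE)
  from yc obtain h n' C N' where y: "y = (h, cls C)" "bij h" by (rule carrierE)
  from zc obtain l n'' D N'' where z: "z = (l, cls D)" "bij l" by (rule carrierE)
  have hl: "bij (h \<circ> l)" using bij_comp[OF z(2) y(2)] .
  have e: "sd (l -` sd (h -` B) C) D = sd ((h \<circ> l) -` B) (sd (l -` C) D)"
    by (rule Set.set_eqI) (simp, blast)
  have "x \<otimes>\<^bsub>Gsd\<^esub> y \<otimes>\<^bsub>Gsd\<^esub> z = (g \<circ> h \<circ> l, cls (sd (l -` sd (h -` B) C) D))"
    using x(1) y(1) z(1) mult_Gsd[OF y(2)] mult_Gsd[OF z(2)] by simp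
  also have "\<dots> = (g \<circ> (h \<circ> l), cls (sd ((h \<circ> l) -` B) (sd (l -` C) D)))"
    by (simp only: e comp_assoc)
  also have "\<dots> = x \<otimes>\<^bsub>Gsd\<^esub> (y \<otimes>\<^bsub>Gsd\<^esub> z)"
    using x(1) y(1) z(1) mult_Gsd[OF z(2)] mult_Gsd[OF hl] by simp
  finally show "x \<otimes>\<^bsub>Gsd\<^esub> y \<otimes>\<^bsub>Gsd\<^esub> z = x \<otimes>\<^bsub>Gsd\<^esub> (y \<otimes>\<^bsub>Gsd\<^esub> z)" .
next
  fix x assume xc: "x \<in> carrier Gsd"
  from xc obtain g n B N where x: "x = (g, cls B)" "bij g" by (rule carrierE)
  have "sd {} B = B" by (rule Set.set_eqI) simp
  then show "\<one>\<^bsub>Gsd\<^esub> \<otimes>\<^bsub>Gsd\<^esub> x = x" using x mult_Gsd[OF x(2)] by (simp add: one_Gsd)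
next
  fix x assume xc: "x \<in> carrier Gsd"
  from xc obtain g n B N where x: "x = (g, cls B)" "bij g" "level g n" "detn N B" by (rule carrierE)
  have yc: "(inv_into UNIV g, cls (inv_into UNIV g -` B)) \<in> carrier Gsd"
    using carrierI[OF bij_imp_bij_inv[OF x(2)] level_inv[OF x(2,3)] det_vimage[OF level_inv[OF x(2,3)] x(4)]] .
  have ig: "inv_into UNIV g \<circ> g = id" using x(2) by (simp add: bij_is_inj)
  have "g -` (inv_into UNIV g -` B) = B" by (simp add: vimage_comp ig)
  moreover have "sd B B = {}" by (rule Set.set_eqI) simp
  ultimately have "(inv_into UNIV g, cls (inv_into UNIV g -` B)) \<otimes>\<^bsub>Gsd\<^esub> x = \<one>\<^bsub>Gsd\<^esub>"
    using x ig mult_Gsd[OF x(2)] by (simp add: one_Gsd)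
  then show "\<exists>y\<in>carrier Gsd. y \<otimes>\<^bsub>Gsd\<^esub> x = \<one>\<^bsub>Gsd\<^esub>" using yc by blast
qed

lemma inv_self: "t \<in> carrier Gsd \<Longrightarrow> t \<otimes>\<^bsub>Gsd\<^esub> t = \<one>\<^bsub>Gsd\<^esub> \<Longrightarrow> inv\<^bsub>Gsd\<^esub> t = t"
  using group.inv_equality[OF group_Gsd] by blast

lemma infinite_family:
  assumes "inj (\<phi> :: nat \<Rightarrow> 'a)" "\<And>m. \<phi> m \<in> S" shows "infinite S"
  using assms range_inj_infinite infinite_super by (metis image_subsetI)

lemma case_nonid:
  assumes A: "detn NA A" and h: "h = (k, cls B)" "bij k" "level k n" "detn NB B" and k: "k \<noteq> id"
  shows "infinite {inv\<^bsub>Gsd\<^esub> t \<otimes>\<^bsub>Gsd\<^esub> h \<otimes>\<^bsub>Gsd\<^esub> t | t. t \<in> centralizer_of Gsd (ftilde A)}"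
proof -
  obtain x0 where x0: "k x0 \<noteq> x0" using k by (metis eq_id_iff)
  define y0 where "y0 = k x0"
  define F where "F m = {x. (\<forall>j<n. x j = y0 j) \<and> x (n+m)}" for m
  have dF: "detn (n+m+1) (F m)" for m unfolding detn_def F_def by auto
  define t where "t m = (id :: cantor \<Rightarrow> cantor, cls (F m))" for m
  have tc: "t m \<in> carrier Gsd" for m unfolding t_def by (rule carrierI[OF bij_id _ dF[of m], of 0]) (simp add: level_def)
  have "sd (F m) A = sd A (F m)" for m by auto
  then have tcent: "t m \<in> centralizer_of Gsd (ftilde A)" for m
    using tc by (simp add: centralizer_of_def t_def ftilde_def mult_Gsd)
  have "sd (F m) (F m) = {}" for m by auto
  then have tinv: "inv\<^bsub>Gsd\<^esub> (t m) = t m" for m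
    using tc by (intro inv_self) (simp_all add: t_def mult_Gsd one_Gsd)
  define P where "P m = sd (sd (k -` F m) B) (F m)" for m
  have conj: "inv\<^bsub>Gsd\<^esub> (t m) \<otimes>\<^bsub>Gsd\<^esub> h \<otimes>\<^bsub>Gsd\<^esub> t m = (k, cls (P m))" for m
    unfolding tinv using h by (simp add: t_def mult_Gsd P_def)
  have kout: "k x \<notin> F m" if "\<forall>j<n. x j = y0 j" for x m
  proof
    assume "k x \<in> F m"
    then have "\<forall>j<n. k x j = k x0 j" by (simp add: F_def y0_def)
    then have "\<forall>j<n. x j = x0 j" using level_inj_prefix[OF h(2,3)] by blast
    then have "\<forall>j<n. k x0 j = x0 j" using that by (simp add: y0_def)
    moreover have "\<forall>j\<ge>n. k x0 j = x0 j" using h(3) by (simp add: level_def)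
    ultimately have "k x0 = x0" by (intro ext) (metis not_le)
    then show False using x0 by simp
  qed
  have "inj (\<lambda>m. (k, cls (P m)))"
  proof
    fix m m' assume eq: "(k, cls (P m)) = (k, cls (P m'))"
    show "m = m'"
    proof (rule ccontr)
      assume ne: "m \<noteq> m'"
      define p where "p = (\<lambda>i. if i = n+m then True else if i = n+m' then False else y0 i)"
      have pp: "\<forall>j<n. p j = y0 j" by (simp add: p_def)
      have "p \<in> F m" "p \<notin> F m'" using ne by (auto simp: F_def p_def)
      then have "p \<notin> P m \<longleftrightarrow> p \<in> P m'" using kout[OF pp] by (simp add: P_def)
      then have n1: "P m \<noteq> P m'" by blast
      define q where "q = (\<lambda>i::nat. False)"
      have "k q (n+m) = False" "k q (n+m') = False" using h(3) by (simp_all add: level_def q_def)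
      then have "q \<in> P m \<longleftrightarrow> q \<in> P m'" by (simp add: P_def F_def q_def)
      then have n2: "P m \<noteq> - P m'" by blast
      from eq n1 n2 show False by (simp add: cls_eq)
    qed
  qed
  moreover have "(k, cls (P m)) \<in> {inv\<^bsub>Gsd\<^esub> t \<otimes>\<^bsub>Gsd\<^esub> h \<otimes>\<^bsub>Gsd\<^esub> t | t. t \<in> centralizer_of Gsd (ftilde A)}" for m
    using conj[of m, symmetric] tcent[of m] by blast
  ultimately show ?thesis by (rule infinite_family)
qed

lemma case_id:
  assumes A: "detn N A" and B: "detn N B" and p: "p \<in> B" and q: "q \<notin> B" and pq: "p \<in> A \<longleftrightarrow> q \<in> A"
  shows "infinite {inv\<^bsub>Gsd\<^esub> t \<otimes>\<^bsub>Gsd\<^esub> (id, cls B) \<otimes>\<^bsub>Gsd\<^esub> t | t. t \<in> centralizer_of Gsd (ftilde A)}"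
proof -
  have npq: "\<not> (\<forall>i<N. q i = p i)" using B p q unfolding detn_def by metis
  define g where "g m x = (if (\<forall>i<N. x i = p i) \<and> x (N+m) then (\<lambda>i. if i<N then q i else x i)
      else if (\<forall>i<N. x i = q i) \<and> x (N+m) then (\<lambda>i. if i<N then p i else x i) else x)" for m x
  have g1: "g m x = (\<lambda>i. if i<N then q i else x i)" if "(\<forall>i<N. x i = p i) \<and> x (N+m)" for m x
    unfolding g_def by (rule if_P[OF that])
  have g2: "g m x = (\<lambda>i. if i<N then p i else x i)"
    if "\<not> ((\<forall>i<N. x i = p i) \<and> x (N+m))" "(\<forall>i<N. x i = q i) \<and> x (N+m)" for m x
    unfolding g_def by (simp only: if_not_P[OF that(1)] if_P[OF that(2)])
  have g3: "g m x = x"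
    if "\<not> ((\<forall>i<N. x i = p i) \<and> x (N+m))" "\<not> ((\<forall>i<N. x i = q i) \<and> x (N+m))" for m x
    unfolding g_def by (simp only: if_not_P[OF that(1)] if_not_P[OF that(2)])
  have gg: "g m (g m x) = x" for m x
  proof (cases "(\<forall>i<N. x i = p i) \<and> x (N+m)")
    case True
    define x' where "x' = (\<lambda>i. if i<N then q i else x i)"
    have gx: "g m x = x'" using g1[OF True] by (simp add: x'_def)
    have c1: "\<not> ((\<forall>i<N. x' i = p i) \<and> x' (N+m))" using npq by (simp add: x'_def)
    have c2: "(\<forall>i<N. x' i = q i) \<and> x' (N+m)" using True by (simp add: x'_def)
    have "g m x' = (\<lambda>i. if i<N then p i else x' i)" by (rule g2[OF c1 c2])
    also have "\<dots> = x" using True by (simp add: x'_def fun_eq_iff)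
    finally show ?thesis using gx by simp
  next
    case F1: False
    show ?thesis
    proof (cases "(\<forall>i<N. x i = q i) \<and> x (N+m)")
      case True
      define x' where "x' = (\<lambda>i. if i<N then p i else x i)"
      have gx: "g m x = x'" using g2[OF F1 True] by (simp add: x'_def)
      have c1: "(\<forall>i<N. x' i = p i) \<and> x' (N+m)" using True by (simp add: x'_def)
      have "g m x' = (\<lambda>i. if i<N then q i else x' i)" by (rule g1[OF c1])
      also have "\<dots> = x" using True by (simp add: x'_def fun_eq_iff)
      finally show ?thesis using gx by simp
    next
      case False
      then show ?thesis using g3[OF F1 False] by simp
    qed
  qed
  then have gid: "g m \<circ> g m = id" for m by (simp add: fun_eq_iff)
  then have gb: "bij (g m)" for m using o_bij by blast
  have gl: "level (g m) (N+m+1)" for m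
    unfolding level_def
  proof (intro conjI allI impI)
    fix x :: cantor and i :: nat assume "N + m + 1 \<le> i" then show "g m x i = x i" by (simp add: g_def)
  next
    fix x y :: cantor and i :: nat assume xy: "\<forall>i<N+m+1. x i = y i" and i: "i < N+m+1"
    have c1: "((\<forall>i<N. x i = p i) \<and> x (N+m)) = ((\<forall>i<N. y i = p i) \<and> y (N+m))" using xy by auto
    have c2: "((\<forall>i<N. x i = q i) \<and> x (N+m)) = ((\<forall>i<N. y i = q i) \<and> y (N+m))" using xy by auto
    show "g m x i = g m y i" unfolding g_def c1 c2 using xy i by auto
  qed
  have dA: "\<And>u v. \<forall>i<N. u i = v i \<Longrightarrow> u \<in> A \<longleftrightarrow> v \<in> A" using A unfolding detn_def by blast
  have gA: "g m x \<in> A \<longleftrightarrow> x \<in> A" for m x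
  proof (cases "(\<forall>i<N. x i = p i) \<and> x (N+m)")
    case True
    have "g m x \<in> A \<longleftrightarrow> q \<in> A" using g1[OF True] by (intro dA) simp
    moreover have "x \<in> A \<longleftrightarrow> p \<in> A" using True by (intro dA) simp
    ultimately show ?thesis using pq by simp
  next
    case F1: False
    show ?thesis
    proof (cases "(\<forall>i<N. x i = q i) \<and> x (N+m)")
      case True
      have "g m x \<in> A \<longleftrightarrow> p \<in> A" using g2[OF F1 True] by (intro dA) simp
      moreover have "x \<in> A \<longleftrightarrow> q \<in> A" using True by (intro dA) simp
      ultimately show ?thesis using pq by simp
    next
      case False
      then show ?thesis using g3[OF F1 False] by simp
    qed
  qed
  then have gvA: "g m -` A = A" for m by auto
  define t where "t m = (g m, cls {})" for m
  have tc: "t m \<in> carrier Gsd" for m unfolding t_def by (rule carrierI[OF gb gl, of 0]) (simp add: detn_def)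
  have "sd {} A = A" "sd A {} = A" by auto
  then have tcent: "t m \<in> centralizer_of Gsd (ftilde A)" for m
    using tc by (simp add: centralizer_of_def t_def ftilde_def mult_Gsd gb gvA)
  have "sd {} {} = {}" by auto
  then have tinv: "inv\<^bsub>Gsd\<^esub> (t m) = t m" for m
    using tc by (intro inv_self) (simp_all add: t_def mult_Gsd one_Gsd gb gid)
  have "sd {} B = B" "sd (g m -` B) {} = g m -` B" for m by auto
  then have conj: "inv\<^bsub>Gsd\<^esub> (t m) \<otimes>\<^bsub>Gsd\<^esub> (id, cls B) \<otimes>\<^bsub>Gsd\<^esub> t m = (id, cls (g m -` B))" for m
    unfolding tinv by (simp add: t_def mult_Gsd gb gid)
  have Bp: "\<And>u. \<forall>i<N. u i = p i \<Longrightarrow> u \<in> B" and Bq: "\<And>u. \<forall>i<N. u i = q i \<Longrightarrow> u \<notin> B"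
    using B p q unfolding detn_def by blast+
  have "inj (\<lambda>m. (id :: cantor \<Rightarrow> cantor, cls (g m -` B)))"
  proof
    fix m m' assume eq: "(id :: cantor \<Rightarrow> cantor, cls (g m -` B)) = (id, cls (g m' -` B))"
    show "m = m'"
    proof (rule ccontr)
      assume ne: "m \<noteq> m'"
      define z where "z = (\<lambda>i. if i = N+m then True else if i = N+m' then False else p i)"
      have zp: "\<forall>i<N. z i = p i" by (simp add: z_def)
      have "g m z = (\<lambda>i. if i<N then q i else z i)" using zp by (simp add: g_def z_def)
      then have "g m z \<notin> B" by (intro Bq) simp
      moreover have "g m' z = z" using ne by (simp add: g_def z_def)
      moreover have "z \<in> B" using Bp zp by blast
      ultimately have n1: "g m -` B \<noteq> g m' -` B" by blast
      define w where "w = (\<lambda>i. if i = N+m \<or> i = N+m' then False else p i)"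
      have "g m w = w" "g m' w = w" by (simp_all add: g_def w_def)
      moreover have "w \<in> B" using Bp by (simp add: w_def)
      ultimately have n2: "g m -` B \<noteq> - (g m' -` B)" by blast
      from eq n1 n2 show False by (simp add: cls_eq)
    qed
  qed
  moreover have "(id, cls (g m -` B)) \<in> {inv\<^bsub>Gsd\<^esub> t \<otimes>\<^bsub>Gsd\<^esub> (id, cls B) \<otimes>\<^bsub>Gsd\<^esub> t | t. t \<in> centralizer_of Gsd (ftilde A)}" for m
    using conj[of m, symmetric] tcent[of m] by blast
  ultimately show ?thesis by (rule infinite_family)
qed

theorem lemma3p3:
  fixes A :: "cantor set"
  assumes "clopen_set A" and "A \<noteq> {}" and "A \<noteq> UNIV"
  shows "fpc Gsd (ftilde A) = {\<one>\<^bsub>Gsd\<^esub>, ftilde A}"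
proof -
  interpret G: group Gsd by (rule group_Gsd)
  obtain NA where NA: "detn NA A" using clopen_det[OF assms(1)] by blast
  have fc: "ftilde A \<in> carrier Gsd" unfolding ftilde_def
    by (rule carrierI[OF bij_id _ NA, of 0]) (simp add: level_def)
  show ?thesis
  proof
    show "{\<one>\<^bsub>Gsd\<^esub>, ftilde A} \<subseteq> fpc Gsd (ftilde A)"
    proof -
      have "{inv\<^bsub>Gsd\<^esub> t \<otimes>\<^bsub>Gsd\<^esub> \<one>\<^bsub>Gsd\<^esub> \<otimes>\<^bsub>Gsd\<^esub> t | t. t \<in> centralizer_of Gsd (ftilde A)} \<subseteq> {\<one>\<^bsub>Gsd\<^esub>}"
        by (auto simp: centralizer_of_def)
      then have f1: "finite {inv\<^bsub>Gsd\<^esub> t \<otimes>\<^bsub>Gsd\<^esub> \<one>\<^bsub>Gsd\<^esub> \<otimes>\<^bsub>Gsd\<^esub> t | t. t \<in> centralizer_of Gsd (ftilde A)}"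
        by (rule finite_subset) simp
      have "inv\<^bsub>Gsd\<^esub> t \<otimes>\<^bsub>Gsd\<^esub> ftilde A \<otimes>\<^bsub>Gsd\<^esub> t = ftilde A" if "t \<in> centralizer_of Gsd (ftilde A)" for t
      proof -
        have t: "t \<in> carrier Gsd" "t \<otimes>\<^bsub>Gsd\<^esub> ftilde A = ftilde A \<otimes>\<^bsub>Gsd\<^esub> t"
          using that by (auto simp: centralizer_of_def)
        have "inv\<^bsub>Gsd\<^esub> t \<otimes>\<^bsub>Gsd\<^esub> ftilde A \<otimes>\<^bsub>Gsd\<^esub> t = inv\<^bsub>Gsd\<^esub> t \<otimes>\<^bsub>Gsd\<^esub> (ftilde A \<otimes>\<^bsub>Gsd\<^esub> t)"
          by (rule G.m_assoc) (simp_all add: t fc G.inv_closed)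
        also have "\<dots> = inv\<^bsub>Gsd\<^esub> t \<otimes>\<^bsub>Gsd\<^esub> (t \<otimes>\<^bsub>Gsd\<^esub> ftilde A)" using t(2) by simp
        also have "\<dots> = inv\<^bsub>Gsd\<^esub> t \<otimes>\<^bsub>Gsd\<^esub> t \<otimes>\<^bsub>Gsd\<^esub> ftilde A" by (rule G.m_assoc[symmetric]) (simp_all add: t fc G.inv_closed)
        also have "\<dots> = ftilde A" using t fc by (simp add: G.l_inv G.l_one)
        finally show ?thesis .
      qed
      then have "{inv\<^bsub>Gsd\<^esub> t \<otimes>\<^bsub>Gsd\<^esub> ftilde A \<otimes>\<^bsub>Gsd\<^esub> t | t. t \<in> centralizer_of Gsd (ftilde A)} \<subseteq> {ftilde A}"
        by auto
      then have f2: "finite {inv\<^bsub>Gsd\<^esub> t \<otimes>\<^bsub>Gsd\<^esub> ftilde A \<otimes>\<^bsub>Gsd\<^esub> t | t. t \<in> centralizer_of Gsd (ftilde A)}"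
        by (rule finite_subset) simp
      show ?thesis using f1 f2 fc by (simp add: fpc_def)
    qed
  next
    show "fpc Gsd (ftilde A) \<subseteq> {\<one>\<^bsub>Gsd\<^esub>, ftilde A}"
    proof
      fix h assume hf: "h \<in> fpc Gsd (ftilde A)"
      then have hc: "h \<in> carrier Gsd"
        and fin: "finite {inv\<^bsub>Gsd\<^esub> t \<otimes>\<^bsub>Gsd\<^esub> h \<otimes>\<^bsub>Gsd\<^esub> t | t. t \<in> centralizer_of Gsd (ftilde A)}"
        by (auto simp: fpc_def)
      obtain k n B NB where h: "h = (k, cls B)" "bij k" "level k n" "detn NB B" using hc by (metis carrierE)
      have kid: "k = id" using case_nonid[OF NA h] fin by blast
      define N where "N = max NA NB"
      have AN: "detn N A" and BN: "detn N B" using NA h(4) by (auto simp: N_def intro: det_mono)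
      have "\<not> (\<exists>p q. p \<in> B \<and> q \<notin> B \<and> (p \<in> A \<longleftrightarrow> q \<in> A))"
        using case_id[OF AN BN] fin h(1) kid by blast
      then have "B = {} \<or> B = UNIV \<or> B = A \<or> B = - A" by blast
      then have "cls B = cls {} \<or> cls B = cls A" by (auto simp: cls_eq)
      then show "h \<in> {\<one>\<^bsub>Gsd\<^esub>, ftilde A}" using h(1) kid by (auto simp: one_Gsd ftilde_def)
    qed
  qed
qed

end
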